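(* For every positive integer $n$, $\chi_{\mu_2}(Q_n)\le \gamma(Q_n)$.
   Context: $Q_n$ is the $n$-dimensional hypercube: vertices are binary $n$-tuples, two being adjacent iff they differ in exactly one coordinate. $\gamma(G)$ is the domination number: the minimum size of a set $D$ such that every vertex outside $D$ has a neighbor in $D$. A set $M\subseteq V(G)$ is a $2$-distance mutual-visibility set if for every two vertices $u,v\in M$ there exists a shortest $u,v$-path of length at most $2$ none of whose internal vertices lies in $M$. $\chi_{\mu_2}(G)$ is the minimum cardinality of a partition of $V(G)$ into $2$-distance mutual-visibility sets. *)

theory Defs
  imports Main
begin

definition dominating_set :: "'a set \<Rightarrow> ('a \<Rightarrow> 'a \<Rightarrow> bool) \<Rightarrow> 'a set \<Rightarrow> bool" where
  "dominating_set V E D \<longleftrightarrow> D \<subseteq> V \<and> (\<forall>v\<in>V - D. \<exists>d\<in>D. E v d)"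

definition domination_number :: "'a set \<Rightarrow> ('a \<Rightarrow> 'a \<Rightarrow> bool) \<Rightarrow> nat" where
  "domination_number V E = (LEAST k. \<exists>D. dominating_set V E D \<and> card D = k)"

text \<open>For distinct u, v: a shortest u,v-path of length at most 2 with no internal vertex in M
  exists iff u, v are adjacent (length 1, no internal vertex), or they are non-adjacent and have a
  common neighbour outside M (then the distance is exactly 2). For u = v the trivial path works.\<close>
definition two_dist_mv_set :: "'a set \<Rightarrow> ('a \<Rightarrow> 'a \<Rightarrow> bool) \<Rightarrow> 'a set \<Rightarrow> bool" where
  "two_dist_mv_set V E M \<longleftrightarrow> M \<subseteq> V \<and>
     (\<forall>u\<in>M. \<forall>v\<in>M. u \<noteq> v \<longrightarrow>
        (E u v \<or> (\<exists>w\<in>V - M. E u w \<and> E w v)))"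

definition is_partition :: "'a set \<Rightarrow> 'a set set \<Rightarrow> bool" where
  "is_partition V P \<longleftrightarrow> \<Union>P = V \<and> {} \<notin> P \<and>
     (\<forall>A\<in>P. \<forall>B\<in>P. A \<noteq> B \<longrightarrow> A \<inter> B = {})"

definition chi_mu2 :: "'a set \<Rightarrow> ('a \<Rightarrow> 'a \<Rightarrow> bool) \<Rightarrow> nat" where
  "chi_mu2 V E = (LEAST k. \<exists>P. is_partition V P \<and> finite P \<and>
      (\<forall>M\<in>P. two_dist_mv_set V E M) \<and> card P = k)"

text \<open>The hypercube Q_n: a binary n-tuple is identified with its support, a subset of {0..<n};
  two tuples differ in exactly one coordinate iff their supports have symmetric difference of size 1.\<close>
definition hypercube_V :: "nat \<Rightarrow> nat set set" where
  "hypercube_V n = Pow {0..<n}"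

definition hypercube_E :: "nat set \<Rightarrow> nat set \<Rightarrow> bool" where
  "hypercube_E x y \<longleftrightarrow> card ((x - y) \<union> (y - x)) = 1"

end

theory Submission
  imports Defs
begin

lemma E_iff: "hypercube_E x y \<longleftrightarrow> (\<exists>i. (x - y) \<union> (y - x) = {i})"
  unfolding hypercube_E_def by (simp add: card_1_singleton_iff)

lemma E_sym: "hypercube_E x y = hypercube_E y x"
  unfolding hypercube_E_def by (simp add: Un_commute)

lemma symd_eq: "(u - d) \<union> (d - u) = {i} \<Longrightarrow> u = (d - {i}) \<union> ({i} - d)"
  by blast

lemma nbhd_mv:
  assumes MV: "M \<subseteq> hypercube_V n" and dV: "d \<in> hypercube_V n"
    and nb: "\<forall>v\<in>M. v = d \<or> hypercube_E v d"
  shows "two_dist_mv_set (hypercube_V n) hypercube_E M"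
  unfolding two_dist_mv_set_def
proof (intro conjI ballI impI MV)
  fix u v assume u: "u \<in> M" and v: "v \<in> M" and uv: "u \<noteq> v"
  show "hypercube_E u v \<or> (\<exists>w\<in>hypercube_V n - M. hypercube_E u w \<and> hypercube_E w v)"
  proof (cases "u = d \<or> v = d")
    case True
    then show ?thesis using nb u v uv E_sym by metis
  next
    case False
    then obtain i j where i: "(u - d) \<union> (d - u) = {i}" and j: "(v - d) \<union> (d - v) = {j}"
    proof -
      have "hypercube_E u d" "hypercube_E v d" using nb u v False by auto
      then show ?thesis using that unfolding E_iff by blast
    qed
    have ui: "u = (d - {i}) \<union> ({i} - d)" using symd_eq[OF i] .
    have vj: "v = (d - {j}) \<union> ({j} - d)" using symd_eq[OF j] .
    have ij: "i \<noteq> j" using ui vj uv by blast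
    have uV: "u \<subseteq> {0..<n}" "v \<subseteq> {0..<n}" "d \<subseteq> {0..<n}" using u v MV dV
      by (auto simp: hypercube_V_def)
    have "i \<in> {0..<n}" using i uV by blast
    moreover have "j \<in> {0..<n}" using j uV by blast
    ultimately have wV: "(d - {i,j}) \<union> ({i,j} - d) \<in> hypercube_V n"
      using uV by (auto simp: hypercube_V_def)
    define w where "w = (d - {i,j}) \<union> ({i,j} - d)"
    have wd: "w \<noteq> d" using ij unfolding w_def by blast
    have wnd: "\<not> hypercube_E w d"
    proof
      assume "hypercube_E w d"
      then obtain k where "(w - d) \<union> (d - w) = {k}" by (auto simp: E_iff)
      moreover have "(w - d) \<union> (d - w) = {i, j}" unfolding w_def by blast
      ultimately have "i \<in> {k}" "j \<in> {k}" by auto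
      then show False using ij by auto
    qed
    have "w \<notin> M" using nb wd wnd by blast
    moreover have "hypercube_E u w"
      unfolding E_iff by (rule exI[of _ j]) (use ui w_def ij in blast)
    moreover have "hypercube_E w v"
      unfolding E_iff by (rule exI[of _ i]) (use vj w_def ij in blast)
    ultimately show ?thesis using wV w_def by blast
  qed
qed

theorem proposition6p3:
  fixes n :: nat
  assumes "n \<ge> 1"
  shows "chi_mu2 (hypercube_V n) hypercube_E \<le> domination_number (hypercube_V n) hypercube_E"
proof -
  let ?V = "hypercube_V n"
  have fin: "finite ?V" by (simp add: hypercube_V_def)
  have ex: "\<exists>D. dominating_set ?V hypercube_E D \<and> card D = card ?V"
    by (rule exI[of _ ?V]) (simp add: dominating_set_def)
  obtain D where D: "dominating_set ?V hypercube_E D"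
    and cD: "card D = domination_number ?V hypercube_E"
    using LeastI_ex[of "\<lambda>k. \<exists>D. dominating_set ?V hypercube_E D \<and> card D = k"] ex unfolding domination_number_def by blast
  have DV: "D \<subseteq> ?V" using D by (simp add: dominating_set_def)
  have finD: "finite D" using DV fin finite_subset by blast
  define f where "f v = (if v \<in> D then v else (SOME d. d \<in> D \<and> hypercube_E v d))" for v
  have f: "f v \<in> D \<and> (v = f v \<or> hypercube_E v (f v))" if "v \<in> ?V" for v
  proof (cases "v \<in> D")
    case True then show ?thesis by (simp add: f_def)
  next
    case False
    then have "\<exists>d. d \<in> D \<and> hypercube_E v d" using D that by (auto simp: dominating_set_def)
    from someI_ex[OF this] show ?thesis using False unfolding f_def by simp
  qed
  define C where "C d = {v \<in> ?V. f v = d}" for d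
  define P where "P = C ` D"
  have CD: "d \<in> C d" if "d \<in> D" for d using that DV by (auto simp: C_def f_def)
  have part: "is_partition ?V P"
    unfolding is_partition_def
  proof (intro conjI ballI impI)
    show "\<Union>P = ?V"
    proof
      show "\<Union>P \<subseteq> ?V" by (auto simp: P_def C_def)
      show "?V \<subseteq> \<Union>P"
      proof
        fix v assume "v \<in> ?V"
        then have "v \<in> C (f v)" "f v \<in> D" using f by (auto simp: C_def)
        then show "v \<in> \<Union>P" by (auto simp: P_def)
      qed
    qed
    show "{} \<notin> P" using CD by (auto simp: P_def)
    fix A B assume "A \<in> P" "B \<in> P" "A \<noteq> B"
    then show "A \<inter> B = {}" by (auto simp: P_def C_def)
  qed
  have mv: "\<forall>M\<in>P. two_dist_mv_set ?V hypercube_E M"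
  proof
    fix M assume "M \<in> P"
    then obtain d where d: "d \<in> D" "M = C d" by (auto simp: P_def)
    show "two_dist_mv_set ?V hypercube_E M"
      by (rule nbhd_mv[of M n d]) (use d DV f in \<open>auto simp: C_def\<close>)
  qed
  have "chi_mu2 ?V hypercube_E \<le> card P"
    unfolding chi_mu2_def
    by (rule Least_le) (use part mv finD in \<open>auto simp: P_def\<close>)
  also have "card P \<le> card D" unfolding P_def by (rule card_image_le[OF finD])
  finally show ?thesis using cD by simp
qed

end
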